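(* Let $\lambda\in\mathbb{R}^n$ and $k\le n-1$. Then the vector $v\in\mathbb{R}^n$ with $v_i=e^k_{n-1}(\lambda_{\hat i})$ can be computed using $O(kn\log n)$ arithmetic operations.
   Context: $e^k_m(x_1,\dots,x_m)=\sum_{S\subseteq[m],|S|=k}\prod_{i\in S}x_i$ is the elementary symmetric polynomial, and $\lambda_{\hat i}\in\mathbb{R}^{n-1}$ is the vector obtained from $\lambda$ by deleting its $i$-th entry. *)

theory Defs
  imports Complex_Main
begin

definition esym :: "nat \<Rightarrow> real list \<Rightarrow> real" where
  "esym k xs = (\<Sum>S\<in>{S. S \<subseteq> {..<length xs} \<and> card S = k}. \<Prod>i\<in>S. xs ! i)"

definition del_entry :: "nat \<Rightarrow> 'a list \<Rightarrow> 'a list" where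
  "del_entry i xs = take i xs @ drop (Suc i) xs"

text \<open>Model of computation: straight-line arithmetic programs (arithmetic circuits).
  Memory initially holds the n inputs; each instruction appends one new value computed
  from earlier memory cells.  Real constants are free; each addition, subtraction and
  multiplication costs one arithmetic operation.\<close>
datatype instr = Const real | Add nat nat | Sub nat nat | Mul nat nat

fun step :: "real list \<Rightarrow> instr \<Rightarrow> real" where
  "step mem (Const c) = c"
| "step mem (Add a b) = mem ! a + mem ! b"
| "step mem (Sub a b) = mem ! a - mem ! b"
| "step mem (Mul a b) = mem ! a * mem ! b"

fun exec :: "real list \<Rightarrow> instr list \<Rightarrow> real list" where
  "exec mem [] = mem"
| "exec mem (ins # p) = exec (mem @ [step mem ins]) p"

fun args :: "instr \<Rightarrow> nat set" where
  "args (Const c) = {}"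
| "args (Add a b) = {a, b}"
| "args (Sub a b) = {a, b}"
| "args (Mul a b) = {a, b}"

fun is_arith :: "instr \<Rightarrow> bool" where
  "is_arith (Const c) = False"
| "is_arith _ = True"

definition wf_slp :: "nat \<Rightarrow> instr list \<Rightarrow> nat list \<Rightarrow> bool" where
  "wf_slp n p out \<longleftrightarrow> (\<forall>j<length p. \<forall>a\<in>args (p ! j). a < n + j)
                     \<and> (\<forall>c\<in>set out. c < n + length p)"

definition cost :: "instr list \<Rightarrow> nat" where
  "cost p = length (filter is_arith p)"

definition computes :: "nat \<Rightarrow> instr list \<Rightarrow> nat list \<Rightarrow> (real list \<Rightarrow> real list) \<Rightarrow> bool" where
  "computes n p out f \<longleftrightarrow> wf_slp n p out \<and>
     (\<forall>xs. length xs = n \<longrightarrow> map (\<lambda>c. exec xs p ! c) out = f xs)"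

end

theory Submission
  imports Defs "HOL-Computational_Algebra.Polynomial"
begin

lemma exec_length[simp]: "length (exec mem p) = length mem + length p"
  by (induction p arbitrary: mem) auto

lemma exec_prefix: "i < length mem \<Longrightarrow> exec mem p ! i = mem ! i"
  by (induction p arbitrary: mem) (auto simp: nth_append)

lemma exec_append: "exec mem (p @ q) = exec (exec mem p) q"
  by (induction p arbitrary: mem) auto

lemma step_cong: "(\<And>a. a \<in> args ins \<Longrightarrow> m ! a = m' ! a) \<Longrightarrow> step m ins = step m' ins"
  by (cases ins) auto

lemma exec_char:
  assumes "t < length p" "\<forall>a\<in>args (p ! t). a < length mem + t"
  shows "exec mem p ! (length mem + t) = step (exec mem p) (p ! t)"
proof -
  have p: "p = take t p @ [p ! t] @ drop (Suc t) p"
    using assms(1) by (simp add: id_take_nth_drop)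
  define m0 where "m0 = exec mem (take t p)"
  have lm0: "length m0 = length mem + t" using assms(1) by (simp add: m0_def)
  have E: "exec mem p = exec (m0 @ [step m0 (p ! t)]) (drop (Suc t) p)"
    by (subst p) (simp add: exec_append m0_def)
  have "exec mem p ! (length mem + t) = step m0 (p ! t)"
    unfolding E by (subst exec_prefix) (auto simp: lm0 nth_append)
  also have "\<dots> = step (exec mem p) (p ! t)"
  proof (rule step_cong)
    fix a assume "a \<in> args (p ! t)"
    then have "a < length m0" using assms(2) lm0 by auto
    then show "m0 ! a = exec mem p ! a"
      unfolding E by (subst exec_prefix) (auto simp: nth_append)
  qed
  finally show ?thesis .
qed

lemma esym_snoc: "esym (Suc j) (ys @ [y]) = esym (Suc j) ys + y * esym j ys"
proof -
  define L where "L = length ys"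
  define A where "A = {S. S \<subseteq> {..<L} \<and> card S = Suc j}"
  define Bs where "Bs = {T. T \<subseteq> {..<L} \<and> card T = j}"
  have split: "{S. S \<subseteq> {..<Suc L} \<and> card S = Suc j} = A \<union> insert L ` Bs"
  proof (intro equalityI subsetI)
    fix S assume S: "S \<in> {S. S \<subseteq> {..<Suc L} \<and> card S = Suc j}"
    have fin: "finite S" using S finite_subset by blast
    show "S \<in> A \<union> insert L ` Bs"
    proof (cases "L \<in> S")
      case True
      have "S = insert L (S - {L})" using True by blast
      moreover have "S - {L} \<in> Bs" using S True fin unfolding Bs_def by auto
      ultimately show ?thesis by blast
    next
      case False
      then have "S \<subseteq> {..<L}" using S by (auto simp: less_Suc_eq)
      then show ?thesis using S unfolding A_def by auto
    qed
  next
    fix S assume "S \<in> A \<union> insert L ` Bs"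
    then show "S \<in> {S. S \<subseteq> {..<Suc L} \<and> card S = Suc j}"
    proof
      assume "S \<in> A" then show ?thesis unfolding A_def by auto
    next
      assume "S \<in> insert L ` Bs"
      then obtain T where T: "T \<in> Bs" "S = insert L T" by blast
      have "finite T" "L \<notin> T" using T unfolding Bs_def by (auto intro: finite_subset)
      then show ?thesis using T unfolding Bs_def by auto
    qed
  qed
  have finA: "finite A" unfolding A_def by (rule finite_subset[of _ "Pow {..<L}"]) auto
  have finB: "finite Bs" unfolding Bs_def by (rule finite_subset[of _ "Pow {..<L}"]) auto
  have disj: "A \<inter> insert L ` Bs = {}" unfolding A_def by auto
  have inj: "inj_on (insert L) Bs" unfolding Bs_def inj_on_def
  proof (intro ballI impI)
    fix x y assume "x \<in> {T. T \<subseteq> {..<L} \<and> card T = j}" "y \<in> {T. T \<subseteq> {..<L} \<and> card T = j}" "insert L x = insert L y"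
    then show "x = y" by (metis Diff_insert_absorb lessThan_iff less_irrefl mem_Collect_eq subsetD)
  qed
  have "esym (Suc j) (ys @ [y]) = (\<Sum>S\<in>A \<union> insert L ` Bs. \<Prod>i\<in>S. (ys @ [y]) ! i)"
    unfolding esym_def by (simp add: L_def[symmetric] split)
  also have "\<dots> = (\<Sum>S\<in>A. \<Prod>i\<in>S. (ys @ [y]) ! i) + (\<Sum>S\<in>insert L ` Bs. \<Prod>i\<in>S. (ys @ [y]) ! i)"
    by (rule sum.union_disjoint) (use finA finB disj in auto)
  also have "(\<Sum>S\<in>A. \<Prod>i\<in>S. (ys @ [y]) ! i) = (\<Sum>S\<in>A. \<Prod>i\<in>S. ys ! i)"
    by (intro sum.cong prod.cong refl) (auto simp: A_def L_def nth_append)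
  also have "\<dots> = esym (Suc j) ys" unfolding esym_def A_def L_def ..
  also have "(\<Sum>S\<in>insert L ` Bs. \<Prod>i\<in>S. (ys @ [y]) ! i) = (\<Sum>T\<in>Bs. \<Prod>i\<in>insert L T. (ys @ [y]) ! i)"
    by (rule sum.reindex_cong[OF inj refl refl])
  also have "\<dots> = (\<Sum>T\<in>Bs. y * (\<Prod>i\<in>T. ys ! i))"
  proof (rule sum.cong[OF refl])
    fix T assume T: "T \<in> Bs"
    have "finite T" "L \<notin> T" "T \<subseteq> {..<L}" using T unfolding Bs_def by (auto intro: finite_subset)
    then show "(\<Prod>i\<in>insert L T. (ys @ [y]) ! i) = y * (\<Prod>i\<in>T. ys ! i)"
      by (subst prod.insert) (auto simp: L_def nth_append intro!: prod.cong)
  qed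
  also have "\<dots> = y * esym j ys" unfolding esym_def Bs_def L_def by (simp add: sum_distrib_left)
  finally show ?thesis .
qed

lemma esym_0: "esym 0 xs = 1"
proof -
  have "{S. S \<subseteq> {..<length xs} \<and> card S = 0} = {{}}"
    using finite_subset[of _ "{..<length xs}"] by (auto simp: card_eq_0_iff)
  then show ?thesis unfolding esym_def by simp
qed

lemma esym_Nil: "esym (Suc j) [] = 0"
  unfolding esym_def by simp

definition P :: "real list \<Rightarrow> real poly" where
  "P xs = prod_list (map (\<lambda>x. [:1, x:]) xs)"

lemma coeff_mult_lin: "coeff (p * [:1, c::real:]) (Suc j) = coeff p (Suc j) + c * coeff p j"
  "coeff (p * [:1, c:]) 0 = coeff p 0"
  by (simp_all add: mult.commute[of p] coeff_pCons_Suc coeff_pCons_0)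

lemma P_coeff0: "coeff (P xs) 0 = 1"
proof (induction xs rule: rev_induct)
  case (snoc x xs) then show ?case by (simp add: P_def coeff_mult_lin)
qed (simp add: P_def)

lemma esym_coeff: "esym j xs = coeff (P xs) j"
proof (induction xs arbitrary: j rule: rev_induct)
  case Nil
  then show ?case by (cases j) (auto simp: P_def esym_0 esym_Nil)
next
  case (snoc y ys)
  have PP: "P (ys @ [y]) = P ys * [:1, y:]" by (simp add: P_def)
  show ?case
  proof (cases j)
    case 0
    then show ?thesis using snoc[of 0] by (simp add: PP coeff_mult_lin esym_0)
  next
    case (Suc j')
    then show ?thesis using snoc by (simp add: PP coeff_mult_lin esym_snoc)
  qed
qed

lemma P_del: "i < length xs \<Longrightarrow> P xs = P (del_entry i xs) * [:1, xs ! i:]"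
proof -
  assume "i < length xs"
  then have "xs = take i xs @ xs ! i # drop (Suc i) xs" by (simp add: id_take_nth_drop)
  then have "P xs = P (take i xs @ xs ! i # drop (Suc i) xs)" by simp
  then show ?thesis by (simp add: P_def del_entry_def algebra_simps)
qed

definition ins :: "nat \<Rightarrow> nat \<Rightarrow> nat \<Rightarrow> instr" where
  "ins n k t = (let B = 2*k+1; b = t div B; r = t mod B in
     if b = 0 then Const (if r = 0 then 1 else 0)
     else if r = 0 then Const 1
     else if b \<le> n then
       (if odd r then Mul (b-1) (n + (b-1)*B + (r-1)) else Add (n + (b-1)*B + r) (n + b*B + (r-1)))
     else
       (if odd r then Mul (b-n-1) (n + b*B + (r-1)) else Sub (n + n*B + r) (n + b*B + (r-1))))"

definition prog :: "nat \<Rightarrow> nat \<Rightarrow> instr list" where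
  "prog n k = map (ins n k) [0..<(2*n+1)*(2*k+1)]"

definition outs :: "nat \<Rightarrow> nat \<Rightarrow> nat list" where
  "outs n k = map (\<lambda>i. n + (n+1+i)*(2*k+1) + 2*k) [0..<n]"

lemma dB: "r < (B::nat) \<Longrightarrow> (b*B+r) div B = b"
  by simp
lemma mB: "r < (B::nat) \<Longrightarrow> (b*B+r) mod B = r"
  by simp

lemma length_prog[simp]: "length (prog n k) = (2*n+1)*(2*k+1)"
  unfolding prog_def by (simp only: length_map length_upt diff_zero)

lemma prog_nth: "t < (2*n+1)*(2*k+1) \<Longrightarrow> prog n k ! t = ins n k t"
  unfolding prog_def by (simp only: nth_map_upt add_0)

lemma ins_simp: "r < 2*k+1 \<Longrightarrow> ins n k (b*(2*k+1)+r) =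
    (if b = 0 then Const (if r = 0 then 1 else 0)
     else if r = 0 then Const 1
     else if b \<le> n then
       (if odd r then Mul (b-1) (n + (b-1)*(2*k+1) + (r-1)) else Add (n + (b-1)*(2*k+1) + r) (n + b*(2*k+1) + (r-1)))
     else
       (if odd r then Mul (b-n-1) (n + b*(2*k+1) + (r-1)) else Sub (n + n*(2*k+1) + r) (n + b*(2*k+1) + (r-1))))"
  by (simp only: ins_def Let_def dB mB)

lemma ins_args: "t < (2*n+1)*(2*k+1) \<Longrightarrow> a \<in> args (ins n k t) \<Longrightarrow> a < n + t"
proof -
  assume t: "t < (2*n+1)*(2*k+1)" and a: "a \<in> args (ins n k t)"
  define b where "b = t div (2*k+1)"
  define r where "r = t mod (2*k+1)"
  have tt: "t = b*(2*k+1) + r" unfolding b_def r_def by (rule div_mult_mod_eq[symmetric])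
  have r: "r < 2*k+1" unfolding r_def by simp
  have b: "b < 2*n+1" using t tt
    by (metis add_lessD1 mult_less_cancel2)
  from a have "a \<in> args (ins n k (b*(2*k+1)+r))" using tt by simp
  have bb: "\<not> b \<le> n \<Longrightarrow> n*(2*k+1) < b*(2*k+1)" by (intro mult_strict_right_mono) auto
  have bb2: "0 < b \<Longrightarrow> (b-1)*(2*k+1) < b*(2*k+1)" by (intro mult_strict_right_mono) auto
  show ?thesis using r b bb bb2 a unfolding tt ins_simp[OF r]
    by (auto split: if_splits)
qed

lemma wf_prog: "wf_slp n (prog n k) (outs n k)"
  unfolding wf_slp_def
proof (intro conjI allI impI ballI)
  fix j a assume "j < length (prog n k)" "a \<in> args (prog n k ! j)"
  then show "a < n + j" using ins_args[of j n k a] by (simp add: prog_nth)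
next
  fix c assume "c \<in> set (outs n k)"
  then obtain i where i: "i < n" "c = n + (n+1+i)*(2*k+1) + 2*k" by (auto simp: outs_def)
  have "(n+1+i)*(2*k+1) + 2*k < (n+1+i)*(2*k+1) + (2*k+1)" by simp
  also have "\<dots> = (n+2+i)*(2*k+1)" by (simp add: algebra_simps)
  also have "\<dots> \<le> (2*n+1)*(2*k+1)" using i by (intro mult_right_mono) auto
  finally show "c < n + length (prog n k)" using i by (simp only: length_prog)
qed

lemma val_eq:
  assumes "length xs = n" "b < 2*n+1" "r < 2*k+1"
  shows "exec xs (prog n k) ! (n + b*(2*k+1) + r) = step (exec xs (prog n k)) (ins n k (b*(2*k+1)+r))"
proof -
  have t: "b*(2*k+1)+r < (2*n+1)*(2*k+1)"
  proof -
    have "b*(2*k+1)+r < b*(2*k+1) + (2*k+1)" using assms by simp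
    also have "\<dots> = (b+1)*(2*k+1)" by simp
    also have "\<dots> \<le> (2*n+1)*(2*k+1)" using assms by (intro mult_right_mono) auto
    finally show ?thesis .
  qed
  have "exec xs (prog n k) ! (length xs + (b*(2*k+1)+r)) = step (exec xs (prog n k)) (prog n k ! (b*(2*k+1)+r))"
  proof (rule exec_char)
    show "b*(2*k+1)+r < length (prog n k)" using t by (simp only: length_prog)
    show "\<forall>a\<in>args (prog n k ! (b*(2*k+1)+r)). a < length xs + (b*(2*k+1)+r)"
      using ins_args[OF t] assms(1) by (simp only: prog_nth[OF t]) blast
  qed
  then show ?thesis using t assms(1) by (simp only: prog_nth add.assoc)
qed

lemma phase1:
  assumes "length xs = n" "m \<le> n"
  shows "\<forall>j\<le>k. exec xs (prog n k) ! (n + m*(2*k+1) + 2*j) = coeff (P (take m xs)) j"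
  using assms(2)
proof (induction m)
  case 0
  show ?case
  proof (intro allI impI)
    fix j assume j: "j \<le> k"
    have "exec xs (prog n k) ! (n + 0*(2*k+1) + 2*j) = step (exec xs (prog n k)) (ins n k (0*(2*k+1)+2*j))"
      by (rule val_eq) (use assms j in auto)
    also have "\<dots> = (if j = 0 then 1 else 0)" using j by (subst ins_simp) auto
    finally show "exec xs (prog n k) ! (n + 0*(2*k+1) + 2*j) = coeff (P (take 0 xs)) j"
      by (simp add: P_def)
  qed
next
  case (Suc m)
  let ?M = "exec xs (prog n k)"
  have IH: "\<forall>j\<le>k. ?M ! (n + m*(2*k+1) + 2*j) = coeff (P (take m xs)) j" using Suc by simp
  have tk: "take (Suc m) xs = take m xs @ [xs ! m]" using Suc.prems assms(1) by (simp add: take_Suc_conv_app_nth)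
  have PP: "P (take (Suc m) xs) = P (take m xs) * [:1, xs ! m:]" by (simp add: tk P_def)
  have xm: "?M ! m = xs ! m" using Suc.prems assms(1) by (simp add: exec_prefix)
  show ?case
  proof (intro allI impI)
    fix j assume j: "j \<le> k"
    show "?M ! (n + Suc m*(2*k+1) + 2*j) = coeff (P (take (Suc m) xs)) j"
    proof (cases j)
      case 0
      have "?M ! (n + Suc m*(2*k+1) + 2*0) = step ?M (ins n k (Suc m*(2*k+1)+2*0))"
        by (rule val_eq) (use assms Suc.prems in auto)
      also have "\<dots> = 1" by (subst ins_simp) auto
      finally show ?thesis using 0 by (simp add: P_coeff0)
    next
      case (Suc j')
      have a: "?M ! (n + Suc m*(2*k+1) + (2*j'+1)) = step ?M (ins n k (Suc m*(2*k+1)+(2*j'+1)))"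
        by (rule val_eq) (use assms Suc.prems j Suc in auto)
      also have "\<dots> = xs ! m * ?M ! (n + m*(2*k+1) + 2*j')"
        using j Suc Suc.prems xm by (subst ins_simp) auto
      finally have a': "?M ! (n + Suc m*(2*k+1) + (2*j'+1)) = xs ! m * coeff (P (take m xs)) j'"
        using IH j Suc by simp
      have "?M ! (n + Suc m*(2*k+1) + 2*j) = step ?M (ins n k (Suc m*(2*k+1)+2*j))"
        by (rule val_eq) (use assms Suc.prems j in auto)
      also have "\<dots> = ?M ! (n + m*(2*k+1) + 2*j) + ?M ! (n + Suc m*(2*k+1) + (2*j'+1))"
        using j Suc Suc.prems by (subst ins_simp) (auto simp: algebra_simps)
      finally have e: "?M ! (n + Suc m*(2*k+1) + 2*j) = ?M ! (n + m*(2*k+1) + 2*j) + ?M ! (n + Suc m*(2*k+1) + (2*j'+1))" .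
      have h: "?M ! (n + m*(2*k+1) + 2*j) = coeff (P (take m xs)) j" using IH j by blast
      have "?M ! (n + Suc m*(2*k+1) + 2*j) = coeff (P (take m xs)) j + xs ! m * coeff (P (take m xs)) j'"
        using e h a' by simp
      then show ?thesis by (simp add: Suc PP coeff_mult_lin)
    qed
  qed
qed

lemma phase2:
  assumes "length xs = n" "i < n"
  shows "\<forall>j\<le>k. exec xs (prog n k) ! (n + (n+1+i)*(2*k+1) + 2*j) = coeff (P (del_entry i xs)) j"
proof (intro allI impI)
  fix j assume "j \<le> k"
  then show "exec xs (prog n k) ! (n + (n+1+i)*(2*k+1) + 2*j) = coeff (P (del_entry i xs)) j"
  proof (induction j)
    case 0
    have "exec xs (prog n k) ! (n + (n+1+i)*(2*k+1) + 2*0) = step (exec xs (prog n k)) (ins n k ((n+1+i)*(2*k+1)+2*0))"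
      by (rule val_eq) (use assms in auto)
    also have "\<dots> = 1" by (subst ins_simp) auto
    finally show ?case by (simp add: P_coeff0)
  next
    case (Suc j)
    let ?M = "exec xs (prog n k)"
    let ?b = "n+1+i"
    have IH: "?M ! (n + ?b*(2*k+1) + 2*j) = coeff (P (del_entry i xs)) j" using Suc by simp
    have xi: "?M ! i = xs ! i" using assms by (simp add: exec_prefix)
    have "?M ! (n + ?b*(2*k+1) + (2*j+1)) = step ?M (ins n k (?b*(2*k+1)+(2*j+1)))"
      by (rule val_eq) (use assms Suc.prems in auto)
    also have "\<dots> = ?M ! i * ?M ! (n + ?b*(2*k+1) + 2*j)"
      by (subst ins_simp) (use Suc.prems in auto)
    finally have a: "?M ! (n + ?b*(2*k+1) + (2*j+1)) = xs ! i * coeff (P (del_entry i xs)) j"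
      using IH xi by simp
    have "?M ! (n + ?b*(2*k+1) + 2*Suc j) = step ?M (ins n k (?b*(2*k+1)+2*Suc j))"
      by (rule val_eq) (use assms Suc.prems in auto)
    also have "\<dots> = ?M ! (n + n*(2*k+1) + 2*Suc j) - ?M ! (n + ?b*(2*k+1) + (2*j+1))"
      by (subst ins_simp) (use Suc.prems in \<open>auto simp: algebra_simps\<close>)
    finally have e: "?M ! (n + ?b*(2*k+1) + 2*Suc j) = ?M ! (n + n*(2*k+1) + 2*Suc j) - ?M ! (n + ?b*(2*k+1) + (2*j+1))" .
    have h: "?M ! (n + n*(2*k+1) + 2*Suc j) = coeff (P xs) (Suc j)"
      using phase1[OF assms(1) order_refl, of k, rule_format, of "Suc j"] Suc.prems assms(1) by simp
    have "?M ! (n + ?b*(2*k+1) + 2*Suc j) = coeff (P xs) (Suc j) - xs ! i * coeff (P (del_entry i xs)) j"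
      using e h a by simp
    also have "\<dots> = coeff (P (del_entry i xs)) (Suc j)"
      using P_del[of i xs] assms by (simp add: coeff_mult_lin)
    finally show ?case .
  qed
qed

lemma cost_prog: "cost (prog n k) \<le> 4*n*k"
proof -
  define N where "N = (2*n+1)*(2*k+1)"
  define S where "S = {t. t < N \<and> is_arith (ins n k t)}"
  have "cost (prog n k) = card {t. t < length (prog n k) \<and> is_arith (prog n k ! t)}"
    unfolding cost_def by (rule length_filter_conv_card)
  also have "{t. t < length (prog n k) \<and> is_arith (prog n k ! t)} = S"
    unfolding S_def N_def using prog_nth by auto
  also have "S \<subseteq> (\<lambda>(b,r). b*(2*k+1) + r) ` ({1..2*n} \<times> {1..2*k})"
  proof
    fix t assume t: "t \<in> S"
    define b where "b = t div (2*k+1)"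
    define r where "r = t mod (2*k+1)"
    have tt: "t = b*(2*k+1) + r" unfolding b_def r_def by (rule div_mult_mod_eq[symmetric])
    have r: "r < 2*k+1" unfolding r_def by simp
    have b: "b < 2*n+1" using t tt unfolding S_def N_def
      by (metis (no_types, lifting) add_lessD1 mem_Collect_eq mult_less_cancel2)
    have ar: "is_arith (ins n k (b*(2*k+1)+r))" using t tt unfolding S_def by simp
    have "b \<noteq> 0" "r \<noteq> 0" using ar unfolding ins_simp[OF r] by (auto split: if_splits)
    then have "(b, r) \<in> {1..2*n} \<times> {1..2*k}" using b r by auto
    then show "t \<in> (\<lambda>(b,r). b*(2*k+1) + r) ` ({1..2*n} \<times> {1..2*k})" using tt by force
  qed
  then have "card S \<le> card ((\<lambda>(b,r). b*(2*k+1) + r) ` ({1..2*n} \<times> {1..2*k}))"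
    by (intro card_mono) auto
  also have "\<dots> \<le> card ({1..2*n} \<times> {1..2*k})" by (rule card_image_le) auto
  also have "\<dots> = 4*n*k" by (simp add: card_cartesian_product)
  finally show ?thesis by simp
qed

theorem mainTheorem15:
  shows "\<exists>C::real. \<forall>n k::nat. k \<le> n - 1 \<longrightarrow>
           (\<exists>p out. computes n p out
                      (\<lambda>xs. map (\<lambda>i. esym k (del_entry i xs)) [0..<n])
                    \<and> real (cost p) \<le> C * real k * real n * log 2 (real n))"
proof (rule exI[of _ 4], intro allI impI)
  fix n k :: nat assume nk: "k \<le> n - 1"
  show "\<exists>p out. computes n p out (\<lambda>xs. map (\<lambda>i. esym k (del_entry i xs)) [0..<n])
                    \<and> real (cost p) \<le> 4 * real k * real n * log 2 (real n)"
  proof (intro exI conjI)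
    show "computes n (prog n k) (outs n k) (\<lambda>xs. map (\<lambda>i. esym k (del_entry i xs)) [0..<n])"
      unfolding computes_def
    proof (intro conjI allI impI)
      show "wf_slp n (prog n k) (outs n k)" by (rule wf_prog)
      fix xs :: "real list" assume l: "length xs = n"
      show "map (\<lambda>c. exec xs (prog n k) ! c) (outs n k) = map (\<lambda>i. esym k (del_entry i xs)) [0..<n]"
        unfolding outs_def map_map
      proof (rule map_cong[OF refl])
        fix i assume "i \<in> set [0..<n]"
        then have i: "i < n" by simp
        show "((\<lambda>c. exec xs (prog n k) ! c) \<circ> (\<lambda>i. n + (n+1+i)*(2*k+1) + 2*k)) i = esym k (del_entry i xs)"
          using phase2[OF l i, of k, rule_format, of k] by (simp add: esym_coeff)
      qed
    qed
    have c: "real (cost (prog n k)) \<le> 4 * real n * real k"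
      using cost_prog[of n k] by (metis of_nat_le_iff of_nat_mult of_nat_numeral)
    show "real (cost (prog n k)) \<le> 4 * real k * real n * log 2 (real n)"
    proof (cases "k = 0")
      case True then show ?thesis using c by simp
    next
      case False
      then have n2: "n \<ge> 2" using nk by linarith
      then have "log 2 (real n) \<ge> 1" by simp
      then have "4 * real k * real n * 1 \<le> 4 * real k * real n * log 2 (real n)"
        by (intro mult_left_mono) auto
      then show ?thesis using c by (simp add: mult_ac)
    qed
  qed
qed

end
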